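(* Let $G$ be a connected graph on $n\ge 4$ vertices with longest path of length $p$. Let $L_1,L_2,L_3$ be three paths of $G$, each having the vertex $u$ as an endpoint, such that any two of them intersect only in $u$. Suppose $\ell(L_1)=\lceil p/2\rceil$, $\ell(L_2)=p-\lceil p/2\rceil$ and $\ell(L_3)\ge\lceil p/2\rceil-1$. Then $u$ is a cut-vertex of $G$.
   Context: All graphs are finite, simple and undirected. $\ell(P)$ denotes the length (number of edges) of a path $P$. A cut-vertex is a vertex whose removal increases the number of components. *)

theory Defs
  imports Complex_Main
begin

definition graph :: "'a set \<Rightarrow> ('a \<Rightarrow> 'a \<Rightarrow> bool) \<Rightarrow> bool" where
  "graph V E \<longleftrightarrow> finite V \<and> (\<forall>x y. E x y \<longrightarrow> x \<in> V \<and> y \<in> V)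
     \<and> (\<forall>x y. E x y \<longrightarrow> E y x) \<and> (\<forall>x. \<not> E x x)"

definition is_path :: "'a set \<Rightarrow> ('a \<Rightarrow> 'a \<Rightarrow> bool) \<Rightarrow> 'a list \<Rightarrow> bool" where
  "is_path V E P \<longleftrightarrow> P \<noteq> [] \<and> distinct P \<and> set P \<subseteq> V
     \<and> (\<forall>i. Suc i < length P \<longrightarrow> E (P ! i) (P ! Suc i))"

definition path_len :: "'a list \<Rightarrow> nat" where
  "path_len P = length P - 1"

definition longest_path_length :: "'a set \<Rightarrow> ('a \<Rightarrow> 'a \<Rightarrow> bool) \<Rightarrow> nat \<Rightarrow> bool" where
  "longest_path_length V E p \<longleftrightarrow> (\<exists>P. is_path V E P \<and> path_len P = p)
     \<and> (\<forall>P. is_path V E P \<longrightarrow> path_len P \<le> p)"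

definition is_endpoint :: "'a \<Rightarrow> 'a list \<Rightarrow> bool" where
  "is_endpoint u P \<longleftrightarrow> P \<noteq> [] \<and> (u = hd P \<or> u = last P)"

definition reach_in :: "'a set \<Rightarrow> ('a \<Rightarrow> 'a \<Rightarrow> bool) \<Rightarrow> 'a \<Rightarrow> 'a \<Rightarrow> bool" where
  "reach_in S E x y \<longleftrightarrow> (x, y) \<in> {(a, b). a \<in> S \<and> b \<in> S \<and> E a b}\<^sup>* \<and> x \<in> S \<and> y \<in> S"

definition components :: "'a set \<Rightarrow> ('a \<Rightarrow> 'a \<Rightarrow> bool) \<Rightarrow> 'a set set" where
  "components S E = {{y. reach_in S E x y} | x. x \<in> S}"

definition connected_graph :: "'a set \<Rightarrow> ('a \<Rightarrow> 'a \<Rightarrow> bool) \<Rightarrow> bool" where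
  "connected_graph V E \<longleftrightarrow> V \<noteq> {} \<and> (\<forall>x\<in>V. \<forall>y\<in>V. reach_in V E x y)"

definition cut_vertex :: "'a set \<Rightarrow> ('a \<Rightarrow> 'a \<Rightarrow> bool) \<Rightarrow> 'a \<Rightarrow> bool" where
  "cut_vertex V E u \<longleftrightarrow> u \<in> V \<and> card (components (V - {u}) E) > card (components V E)"

end

theory Submission
  imports Defs
begin

lemma is_path_succ: "is_path V E P \<longleftrightarrow> P \<noteq> [] \<and> distinct P \<and> set P \<subseteq> V \<and> successively E P"
  unfolding is_path_def successively_conv_nth by blast

lemma succ_rev_sym: "(\<forall>x y. E x y \<longrightarrow> E y x) \<Longrightarrow> successively E xs \<Longrightarrow> successively E (rev xs)"
  by (simp add: successively_mono)

lemma walk_of_rtrancl: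
  assumes "(x, y) \<in> {(a, b). a \<in> S \<and> b \<in> S \<and> E a b}\<^sup>*" "x \<in> S"
  shows "\<exists>ws. ws \<noteq> [] \<and> hd ws = x \<and> last ws = y \<and> set ws \<subseteq> S \<and> successively E ws"
  using assms
proof (induction rule: rtrancl_induct)
  case base
  then show ?case by (intro exI[of _ "[x]"]) auto
next
  case (step y z)
  then obtain ws where ws: "ws \<noteq> [] \<and> hd ws = x \<and> last ws = y \<and> set ws \<subseteq> S \<and> successively E ws" by blast
  show ?case using ws step(2)
    by (intro exI[of _ "ws @ [z]"]) (auto simp: successively_append_iff)
qed

lemma succ_app1: "successively E (xs @ ys) \<Longrightarrow> successively E xs"
  by (simp add: successively_append_iff)
lemma succ_app2: "successively E (xs @ ys) \<Longrightarrow> successively E ys"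
  by (simp add: successively_append_iff)
lemma succ_join: "successively E (xs @ [z]) \<Longrightarrow> successively E (z # ys) \<Longrightarrow> successively E (xs @ z # ys)"
  by (auto simp add: successively_append_iff successively_Cons)

lemma qpath_aux:
  assumes "ws \<noteq> []" "hd ws \<in> A" "last ws \<in> B" "set ws \<subseteq> S" "successively E ws" "A \<inter> B = {}"
  shows "\<exists>w mid v. w \<in> A \<and> v \<in> B \<and> set mid \<subseteq> S - A - B \<and> distinct mid \<and> successively E (w # mid @ [v])"
  using assms
proof (induction ws rule: length_induct)
  case (1 ws)
  obtain w rest where ws: "ws = w # rest" using 1(2) by (cases ws) auto
  have "rest \<noteq> []" using 1 ws by auto
  then obtain mid v where rest: "rest = mid @ [v]" by (metis rev_exhaust)
  have wA: "w \<in> A" and vB: "v \<in> B" using 1 ws rest by auto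
  have sc: "successively E (w # mid @ [v])" using 1 ws rest by simp
  have wsS: "set (w # mid @ [v]) \<subseteq> S" using 1 ws rest by simp
  note IH = 1(1)[rule_format]
  show ?case
  proof (cases "\<exists>z \<in> set mid. z \<in> A")
    case True
    then obtain z m1 m2 where md: "mid = m1 @ z # m2" "z \<in> A" by (metis split_list)
    have s1: "successively E (z # m2 @ [v])"
      using sc md succ_app2[of E "w # m1" "z # m2 @ [v]"] by simp
    have LL: "length (z # m2 @ [v]) < length ws" using ws rest md by simp
    have SS: "set (z # m2 @ [v]) \<subseteq> S" using wsS md by auto
    show ?thesis by (rule IH[of "z # m2 @ [v]"]) (use s1 md vB 1(7) LL SS in simp_all)
  next
    case nA: False
    show ?thesis
    proof (cases "\<exists>z \<in> set mid. z \<in> B")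
      case True
      then obtain z m1 m2 where md: "mid = m1 @ z # m2" "z \<in> B" by (metis split_list)
      have s1: "successively E (w # m1 @ [z])"
        using sc md succ_app1[of E "w # m1 @ [z]" "m2 @ [v]"] by simp
      have LL: "length (w # m1 @ [z]) < length ws" using ws rest md by simp
      have SS: "set (w # m1 @ [z]) \<subseteq> S" using wsS md by auto
      show ?thesis apply (rule IH[of "w # m1 @ [z]"]) using s1 md wA 1(7) LL SS apply simp_all done
    next
      case nB: False
      show ?thesis
      proof (cases "distinct mid")
        case True
        have "set mid \<subseteq> S - A - B" using nA nB wsS by auto
        then show ?thesis using True wA vB sc by (intro exI[of _ w] exI[of _ mid] exI[of _ v]) simp
      next
        case False
        obtain m1 z m2 m3 where md: "mid = m1 @ z # m2 @ z # m3" using not_distinct_decomp[OF False] by auto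
        have s1: "successively E (w # m1 @ [z])"
          using sc md succ_app1[of E "w # m1 @ [z]" "m2 @ z # m3 @ [v]"] by simp
        have s2: "successively E (z # m3 @ [v])"
          using sc md succ_app2[of E "w # m1 @ z # m2" "z # m3 @ [v]"] by simp
        have s3: "successively E (w # m1 @ z # m3 @ [v])"
          using succ_join[of E "w # m1" z "m3 @ [v]"] s1 s2 by simp
        have LL: "length (w # m1 @ z # m3 @ [v]) < length ws" using ws rest md by simp
        have SS: "set (w # m1 @ z # m3 @ [v]) \<subseteq> S" using wsS md by auto
        show ?thesis by (rule IH[of "w # m1 @ z # m3 @ [v]"]) (use s3 wA vB 1(7) LL SS in simp_all)
      qed
    qed
  qed
qed


lemma succ_pre: "successively E (xs @ z # ys) \<Longrightarrow> successively E (xs @ [z])"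
  by (simp add: successively_append_iff successively_Cons)
lemma succ_suf: "successively E (xs @ z # ys) \<Longrightarrow> successively E (z # ys)"
  by (simp add: successively_append_iff successively_Cons)

lemma P1_lemma:
  assumes sym: "\<forall>x y. E x y \<longrightarrow> E y x"
    and hX: "is_path V E (u # TX)" and hY: "is_path V E (u # TY)" and h3: "is_path V E (u # T3)"
    and dXY: "set TX \<inter> set TY = {}" and dX3: "set TX \<inter> set T3 = {}" and dY3: "set TY \<inter> set T3 = {}"
    and w: "w \<in> set T3" and v: "v \<in> set TX"
    and mV: "set mid \<subseteq> V" and md: "distinct mid"
    and mdisj: "set mid \<inter> (set TX \<union> set TY \<union> set T3 \<union> {u}) = {}"
    and q: "successively E (w # mid @ [v])"
  shows "\<exists>P1 P2. is_path V E P1 \<and> is_path V E P2 \<and>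
           path_len P1 + path_len P2 \<ge> 2 * length TY + length TX + length T3 + 2"
proof -
  obtain Xa Xb where X: "TX = Xa @ v # Xb" using v by (metis split_list)
  obtain Ta Tb where T: "T3 = Ta @ w # Tb" using w by (metis split_list)
  have sX: "successively E (u # Xa @ v # Xb)" and dX: "distinct (u # Xa @ v # Xb)" and VX: "set (u # Xa @ v # Xb) \<subseteq> V"
    using hX X unfolding is_path_succ by auto
  have sT: "successively E (u # Ta @ w # Tb)" and dT: "distinct (u # Ta @ w # Tb)" and VT: "set (u # Ta @ w # Tb) \<subseteq> V"
    using h3 T unfolding is_path_succ by auto
  have sY: "successively E (rev TY @ [u])" and dY: "distinct (u # TY)" and VY: "set (u # TY) \<subseteq> V"
    using hY succ_rev_sym[OF sym, of "u # TY"] unfolding is_path_succ by auto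
  have a1: "successively E (u # Ta @ [w])" using succ_pre[of E "u # Ta" w Tb] sT by simp
  have a2: "successively E (v # Xb)" using succ_suf[of E "u # Xa" v Xb] sX by simp
  have a3: "successively E (u # Xa @ [v])" using succ_pre[of E "u # Xa" v Xb] sX by simp
  have a4: "successively E (w # Tb)" using succ_suf[of E "u # Ta" w Tb] sT by simp
  have a5: "successively E (v # rev mid @ [w])"
    using succ_rev_sym[OF sym q] by simp
  define P1 where "P1 = rev TY @ u # Ta @ w # mid @ v # Xb"
  define P2 where "P2 = rev TY @ u # Xa @ v # rev mid @ w # Tb"
  have s1a: "successively E (rev TY @ u # Ta @ [w])" using succ_join[OF sY a1] .
  have s1b: "successively E (rev TY @ u # Ta @ w # mid @ [v])"
    using succ_join[of E "rev TY @ u # Ta" w "mid @ [v]"] s1a q by simp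
  have s1: "successively E P1"
    using succ_join[of E "rev TY @ u # Ta @ w # mid" v Xb] s1b a2 unfolding P1_def by simp
  have s2a: "successively E (rev TY @ u # Xa @ [v])" using succ_join[OF sY a3] .
  have s2b: "successively E (rev TY @ u # Xa @ v # rev mid @ [w])"
    using succ_join[of E "rev TY @ u # Xa" v "rev mid @ [w]"] s2a a5 by simp
  have s2: "successively E P2"
    using succ_join[of E "rev TY @ u # Xa @ v # rev mid" w Tb] s2b a4 unfolding P2_def by simp
  have "is_path V E P1" unfolding is_path_succ
    using s1 dX dT dY VX VT VY mV md mdisj dXY dX3 dY3 X T unfolding P1_def by auto
  moreover have "is_path V E P2" unfolding is_path_succ
    using s2 dX dT dY VX VT VY mV md mdisj dXY dX3 dY3 X T unfolding P2_def by auto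
  moreover have "path_len P1 + path_len P2 \<ge> 2 * length TY + length TX + length T3 + 2"
    unfolding P1_def P2_def path_len_def using X T by simp
  ultimately show ?thesis by blast
qed


lemma P_small:
  assumes sym: "\<forall>x y. E x y \<longrightarrow> E y x"
    and hX: "is_path V E (u # TX)" and hY: "is_path V E (u # TY)"
    and dXY: "set TX \<inter> set TY = {}"
    and w: "w \<in> V" "w \<notin> set TX \<union> set TY \<union> {u}" and v: "v \<in> set TX"
    and mV: "set mid \<subseteq> V" and md: "distinct mid"
    and mdisj: "set mid \<inter> (set TX \<union> set TY \<union> {u, w}) = {}"
    and q: "successively E (w # mid @ [v])" and lX: "length TX \<le> 1"
  shows "\<exists>P. is_path V E P \<and> path_len P \<ge> length TX + length TY + 1"
proof -
  have X: "TX = [v]" using v lX by (cases TX) auto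
  have sX: "successively E (u # [v])" and dX: "distinct (u # [v])" and VX: "set (u # [v]) \<subseteq> V"
    using hX X unfolding is_path_succ by auto
  have sY: "successively E (rev TY @ [u])" and dY: "distinct (u # TY)" and VY: "set (u # TY) \<subseteq> V"
    using hY succ_rev_sym[OF sym, of "u # TY"] unfolding is_path_succ by auto
  have a5: "successively E (v # rev mid @ [w])"
    using succ_rev_sym[OF sym q] by simp
  define P where "P = rev TY @ u # v # rev mid @ [w]"
  have s2a: "successively E (rev TY @ u # [v])" using succ_join[OF sY sX] .
  have s2: "successively E P"
    using succ_join[of E "rev TY @ [u]" v "rev mid @ [w]"] s2a a5 unfolding P_def by simp
  have "is_path V E P" unfolding is_path_succ
    using s2 dX dY VX VY mV md mdisj dXY X w unfolding P_def by auto
  moreover have "path_len P \<ge> length TX + length TY + 1"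
    unfolding P_def path_len_def using X by simp
  ultimately show ?thesis by blast
qed

lemma orient:
  assumes sym: "\<forall>x y. E x y \<longrightarrow> E y x" and L: "is_path V E L" and e: "is_endpoint u L"
  shows "\<exists>T. is_path V E (u # T) \<and> set (u # T) = set L \<and> length T = path_len L"
proof (cases "u = hd L")
  case True
  then have "L = u # tl L" using L unfolding is_path_def by simp
  then show ?thesis using L unfolding path_len_def by (intro exI[of _ "tl L"]) (metis length_tl)
next
  case False
  then have u: "u = last L" using e unfolding is_endpoint_def by auto
  have L2: "is_path V E (rev L)" using L succ_rev_sym[OF sym, of L] unfolding is_path_succ by auto
  have "rev L = u # tl (rev L)" using L u unfolding is_path_def
    by (metis hd_rev list.collapse Nil_is_rev_conv)
  then show ?thesis using L2 unfolding path_len_def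
    by (intro exI[of _ "tl (rev L)"]) (metis length_rev length_tl set_rev)
qed

lemma qpath:
  assumes "A \<subseteq> S" "B \<subseteq> S" "A \<inter> B = {}" "a \<in> A" "b \<in> B" "reach_in S E a b"
  shows "\<exists>w mid v. w \<in> A \<and> v \<in> B \<and> set mid \<subseteq> S - A - B \<and> distinct mid \<and> successively E (w # mid @ [v])"
proof -
  obtain ws where "ws \<noteq> [] \<and> hd ws = a \<and> last ws = b \<and> set ws \<subseteq> S \<and> successively E ws"
    using walk_of_rtrancl[of a b S E] assms unfolding reach_in_def by blast
  then show ?thesis using qpath_aux[of ws A B S E] assms by blast
qed

lemma cut_lemma:
  assumes g: "graph V E" and c: "connected_graph V E" and u: "u \<in> V"
    and a: "a \<in> V - {u}" and b: "b \<in> V - {u}" and nr: "\<not> reach_in (V - {u}) E a b"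
  shows "cut_vertex V E u"
proof -
  have fin: "finite V" using g unfolding graph_def by simp
  have "components V E = {V}"
  proof -
    have "\<And>x. x \<in> V \<Longrightarrow> {y. reach_in V E x y} = V" using c unfolding connected_graph_def reach_in_def by blast
    then show ?thesis unfolding components_def using c unfolding connected_graph_def by blast
  qed
  then have c1: "card (components V E) = 1" by simp
  define Ca where "Ca = {y. reach_in (V - {u}) E a y}"
  define Cb where "Cb = {y. reach_in (V - {u}) E b y}"
  have "b \<in> Cb" using b unfolding Cb_def reach_in_def by simp
  moreover have "b \<notin> Ca" using nr unfolding Ca_def by simp
  ultimately have ne: "Ca \<noteq> Cb" by blast
  have sub: "{Ca, Cb} \<subseteq> components (V - {u}) E" unfolding components_def Ca_def Cb_def using a b by blast
  have "components (V - {u}) E \<subseteq> Pow (V - {u})" unfolding components_def reach_in_def by blast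
  then have "finite (components (V - {u}) E)" using fin by (meson finite_Diff finite_Pow_iff finite_subset)
  then have "card {Ca, Cb} \<le> card (components (V - {u}) E)" using sub card_mono by blast
  then have "card (components (V - {u}) E) \<ge> 2" using ne by simp
  then show ?thesis unfolding cut_vertex_def using c1 u by simp
qed

lemma ceil_half: "nat \<lceil>real p / 2\<rceil> = (p + 1) div 2"
proof (cases "even p")
  case True
  then obtain k where "p = 2 * k" by blast
  then show ?thesis by simp
next
  case False
  then obtain k where k: "p = 2 * k + 1" using oddE by blast
  have "\<lceil>real p / 2\<rceil> = int k + 1" unfolding k by (simp add: ceiling_eq_iff)
  then show ?thesis using k by simp
qed


theorem lemma4:
  fixes V :: "'a set" and E :: "'a \<Rightarrow> 'a \<Rightarrow> bool" and p :: nat and u :: 'a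
    and L1 L2 L3 :: "'a list"
  assumes "graph V E" and "connected_graph V E" and "card V \<ge> 4"
    and "longest_path_length V E p"
    and "is_path V E L1" and "is_path V E L2" and "is_path V E L3"
    and "is_endpoint u L1" and "is_endpoint u L2" and "is_endpoint u L3"
    and "set L1 \<inter> set L2 = {u}" and "set L1 \<inter> set L3 = {u}" and "set L2 \<inter> set L3 = {u}"
    and "path_len L1 = nat \<lceil>real p / 2\<rceil>"
    and "path_len L2 = p - nat \<lceil>real p / 2\<rceil>"
    and "path_len L3 \<ge> nat \<lceil>real p / 2\<rceil> - 1"
  shows "cut_vertex V E u"
proof -
  note g = assms(1) and conn = assms(2)
  have sym: "\<forall>x y. E x y \<longrightarrow> E y x" using g unfolding graph_def by blast
  have irr: "\<forall>x. \<not> E x x" using g unfolding graph_def by blast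
  have fin: "finite V" using g unfolding graph_def by blast
  have longest: "\<And>P. is_path V E P \<Longrightarrow> path_len P \<le> p" using assms(4) unfolding longest_path_length_def by blast
  define a where "a = (p + 1) div 2"
  have la: "path_len L1 = a" "path_len L2 = p - a" "path_len L3 \<ge> a - 1"
    using assms(14-16) unfolding a_def ceil_half by auto
  obtain T1 where T1: "is_path V E (u # T1)" "set (u # T1) = set L1" "length T1 = a"
    using orient[OF sym assms(5,8)] la by auto
  obtain T2 where T2: "is_path V E (u # T2)" "set (u # T2) = set L2" "length T2 = p - a"
    using orient[OF sym assms(6,9)] la by auto
  obtain T3 where T3: "is_path V E (u # T3)" "set (u # T3) = set L3" "length T3 \<ge> a - 1"
    using orient[OF sym assms(7,10)] la by (metis)
  have uT1: "u \<notin> set T1" using T1(1) unfolding is_path_def by simp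
  have uT2: "u \<notin> set T2" using T2(1) unfolding is_path_def by simp
  have uT3: "u \<notin> set T3" using T3(1) unfolding is_path_def by simp
  have d12: "set T1 \<inter> set T2 = {}" using assms(11) T1(2) T2(2) uT1 uT2 by auto
  have d13: "set T1 \<inter> set T3 = {}" using assms(12) T1(2) T3(2) uT1 uT3 by auto
  have d23: "set T2 \<inter> set T3 = {}" using assms(13) T2(2) T3(2) uT2 uT3 by auto
  have VT1: "set T1 \<subseteq> V" using T1(1) unfolding is_path_def by simp
  have VT2: "set T2 \<subseteq> V" using T2(1) unfolding is_path_def by simp
  have VT3: "set T3 \<subseteq> V" using T3(1) unfolding is_path_def by simp
  have uV: "u \<in> V" using T1(1) unfolding is_path_def by simp
  have ap: "a \<le> p" "p - a \<le> a" "a \<le> p - a + 1" unfolding a_def by auto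
  have p1: "p \<ge> 1"
  proof (rule ccontr)
    assume "\<not> p \<ge> 1"
    then have p0: "p = 0" by simp
    have "card V > 1" using assms(3) by simp
    have "\<not> V \<subseteq> {u}"
    proof
      assume "V \<subseteq> {u}"
      then have "card V \<le> card {u}" by (rule card_mono[rotated]) simp
      then show False using \<open>card V > 1\<close> by simp
    qed
    then obtain y where y: "y \<in> V" "y \<noteq> u" by blast
    have "reach_in V E u y" using conn uV y unfolding connected_graph_def by blast
    then have "(u, y) \<in> {(a, b). a \<in> V \<and> b \<in> V \<and> E a b}\<^sup>*" unfolding reach_in_def by blast
    then have "\<exists>z. (u, z) \<in> {(a, b). a \<in> V \<and> b \<in> V \<and> E a b}" using y(2) by (auto elim: converse_rtranclE)
    then obtain z where "(u, z) \<in> {(a, b). a \<in> V \<and> b \<in> V \<and> E a b}" by blast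
    then have z: "z \<in> V" "E u z" by auto
    have "is_path V E [u, z]" unfolding is_path_def using z uV irr
      by (auto simp: nth_Cons split: nat.splits)
    then have "path_len [u, z] \<le> p" by (rule longest)
    then show False using p0 unfolding path_len_def by simp
  qed
  show ?thesis
  proof (rule ccontr)
    assume ncut: "\<not> cut_vertex V E u"
    have allreach: "\<And>x y. x \<in> V - {u} \<Longrightarrow> y \<in> V - {u} \<Longrightarrow> reach_in (V - {u}) E x y"
      using cut_lemma[OF g conn uV] ncut by blast
    have "T1 \<noteq> []" using T1(3) p1 unfolding a_def by auto
    then obtain b0 where b0: "b0 \<in> set T1 \<union> set T2" by (metis UnI1 list.set_sel(1))
    show False
    proof (cases "T3 = []")
      case False
      then obtain a0 where a0: "a0 \<in> set T3" by (metis list.set_sel(1))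
      obtain w mid v where q: "w \<in> set T3" "v \<in> set T1 \<union> set T2"
        "set mid \<subseteq> (V - {u}) - set T3 - (set T1 \<union> set T2)" "distinct mid" "successively E (w # mid @ [v])"
      proof -
        have i1: "set T3 \<subseteq> V - {u}" using VT3 uT3 by blast
        have i2: "set T1 \<union> set T2 \<subseteq> V - {u}" using VT1 VT2 uT1 uT2 by blast
        have i3: "set T3 \<inter> (set T1 \<union> set T2) = {}" using d13 d23 by blast
        have i4: "reach_in (V - {u}) E a0 b0" using allreach i1 i2 a0 b0 by blast
        show ?thesis using qpath[OF i1 i2 i3 a0 b0 i4] that by blast
      qed
      have mV: "set mid \<subseteq> V" using q(3) by blast
      show False
      proof (cases "v \<in> set T1")
        case True
        have "set mid \<inter> (set T1 \<union> set T2 \<union> set T3 \<union> {u}) = {}" using q(3) by blast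
        from P1_lemma[OF sym T1(1) T2(1) T3(1) d12 d13 d23 q(1) True mV q(4) this q(5)]
        obtain P1 P2 where pp: "is_path V E P1" "is_path V E P2"
          "path_len P1 + path_len P2 \<ge> 2 * length T2 + length T1 + length T3 + 2" by blast
        have "path_len P1 \<le> p" "path_len P2 \<le> p" using longest pp(1,2) by auto
        then have "2 * length T2 + length T1 + length T3 + 2 \<le> 2 * p" using pp(3) by linarith
        then show False using T1(3) T2(3) T3(3) ap by linarith
      next
        case False
        then have v2: "v \<in> set T2" using q(2) by blast
        have "set mid \<inter> (set T2 \<union> set T1 \<union> set T3 \<union> {u}) = {}" using q(3) by blast
        from P1_lemma[OF sym T2(1) T1(1) T3(1) _ d23 d13 q(1) v2 mV q(4) this q(5)] d12
        obtain P1 P2 where pp: "is_path V E P1" "is_path V E P2"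
          "path_len P1 + path_len P2 \<ge> 2 * length T1 + length T2 + length T3 + 2" by blast
        have "path_len P1 \<le> p" "path_len P2 \<le> p" using longest pp(1,2) by auto
        then have "2 * length T1 + length T2 + length T3 + 2 \<le> 2 * p" using pp(3) by linarith
        then show False using T1(3) T2(3) T3(3) ap by linarith
      qed
    next
      case True
      then have a1: "a \<le> 1" using T3(3) by simp
      have "card (set (u # T1) \<union> set (u # T2)) \<le> card (set (u # T1)) + card (set (u # T2))"
        by (rule card_Un_le)
      have "set (u # T1) \<union> set (u # T2) = set (u # T1 @ T2)" by auto
      then have "card (set (u # T1) \<union> set (u # T2)) \<le> length (u # T1 @ T2)"
        by (metis card_length)
      then have "card (set (u # T1) \<union> set (u # T2)) < card V" using T1(3) T2(3) ap a1 assms(3) by simp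
      then have "\<not> V \<subseteq> set (u # T1) \<union> set (u # T2)"
      proof (intro notI)
        assume cl: "card (set (u # T1) \<union> set (u # T2)) < card V" and sub: "V \<subseteq> set (u # T1) \<union> set (u # T2)"
        have "card V \<le> card (set (u # T1) \<union> set (u # T2))" by (rule card_mono) (use sub in auto)
        then show False using cl by simp
      qed
      then obtain a0 where a0: "a0 \<in> V - {u} - (set T1 \<union> set T2)" by auto
      obtain w mid v where q: "w \<in> V - {u} - (set T1 \<union> set T2)" "v \<in> set T1 \<union> set T2"
        "set mid \<subseteq> (V - {u}) - (V - {u} - (set T1 \<union> set T2)) - (set T1 \<union> set T2)" "distinct mid" "successively E (w # mid @ [v])"
      proof -
        have i1: "V - {u} - (set T1 \<union> set T2) \<subseteq> V - {u}" by blast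
        have i2: "set T1 \<union> set T2 \<subseteq> V - {u}" using VT1 VT2 uT1 uT2 by blast
        have i3: "(V - {u} - (set T1 \<union> set T2)) \<inter> (set T1 \<union> set T2) = {}" by blast
        have i4: "reach_in (V - {u}) E a0 b0" using allreach i1 i2 a0 b0 by blast
        show ?thesis using qpath[OF i1 i2 i3 a0 b0 i4] that by blast
      qed
      have mV: "set mid \<subseteq> V" using q(3) by blast
      have wV: "w \<in> V" "w \<notin> set T1 \<union> set T2 \<union> {u}" using q(1) by auto
      show False
      proof (cases "v \<in> set T1")
        case True
        have "set mid \<inter> (set T1 \<union> set T2 \<union> {u, w}) = {}" using q(3) q(1) by blast
        from P_small[OF sym T1(1) T2(1) d12 wV(1) wV(2) True mV q(4) this q(5)] T1(3) a1
        obtain P where pp: "is_path V E P" "path_len P \<ge> length T1 + length T2 + 1" by auto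
        have "path_len P \<le> p" using longest pp(1) by auto
        then show False using pp(2) T1(3) T2(3) ap by linarith
      next
        case False
        then have v2: "v \<in> set T2" using q(2) by blast
        have "set mid \<inter> (set T2 \<union> set T1 \<union> {u, w}) = {}" using q(3) q(1) by blast
        moreover have "w \<notin> set T2 \<union> set T1 \<union> {u}" using wV by blast
        moreover have "set T2 \<inter> set T1 = {}" using d12 by blast
        moreover have "length T2 \<le> 1" using T2(3) ap a1 by simp
        ultimately obtain P where pp: "is_path V E P" "path_len P \<ge> length T2 + length T1 + 1"
          using P_small[OF sym T2(1) T1(1) _ wV(1) _ v2 mV q(4) _ q(5)] by blast
        have "path_len P \<le> p" using longest pp(1) by auto
        then show False using pp(2) T1(3) T2(3) ap by linarith
      qed
    qed
  qed
qed

end
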